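(* Let $C\subseteq\{0,1\}^n$ with $|C|\leq 2^{\frac{1}{64}n}$, let $\epsilon<1/8$, and let $J\subseteq[n]$ with $|J|\leq n/2$. Then a random $X\sim U_J(C)$ is $\epsilon$-far from $C$ with probability $1-o(1)$ (as $n\to\infty$). Furthermore, this remains true when conditioned on any value of $X[J]$.
   Context: $[n]=\{1,\dots,n\}$. For $x\in\{0,1\}^n$ and $J\subseteq[n]$, $x[J]=(x_j)_{j\in J}$. $U(C)$ denotes the uniform distribution on $C$, and $U_J(C)$ denotes the distribution obtained by drawing $x\sim U(C)$ and then replacing $x[[n]\setminus J]$ by a uniformly random vector in $\{0,1\}^{n-|J|}$, independent of everything else. Distance is normalized Hamming distance $d(x,y)=|\{i:x_i\neq y_i\}|/n$, $d(x,C)=\min_{c\in C}d(x,c)$, and $x$ is $\epsilon$-far from $C$ if $d(x,C)>\epsilon$. *)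

theory Defs
  imports "HOL-Probability.Probability"
begin

text \<open>Vectors in {0,1}^n are boolean lists of length n; coordinates are indexed
  by {0..<n} (0-based) instead of [n] = {1..n}.\<close>

definition cube :: "nat \<Rightarrow> bool list set" where
  "cube n = {xs. length xs = n}"

definition hdist :: "bool list \<Rightarrow> bool list \<Rightarrow> real" where
  "hdist x y = real (card {i. i < length x \<and> x ! i \<noteq> y ! i}) / real (length x)"

definition dist_code :: "bool list \<Rightarrow> bool list set \<Rightarrow> real" where
  "dist_code x C = Min ((hdist x) ` C)"

definition eps_far :: "real \<Rightarrow> bool list \<Rightarrow> bool list set \<Rightarrow> bool" where
  "eps_far eps x C \<longleftrightarrow> dist_code x C > eps"

definition restr :: "bool list \<Rightarrow> nat set \<Rightarrow> bool list" where
  "restr x J = map (\<lambda>j. x ! j) (sorted_list_of_set J)"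

definition U_J :: "nat \<Rightarrow> bool list set \<Rightarrow> nat set \<Rightarrow> bool list pmf" where
  "U_J n C J =
     pmf_of_set C \<bind> (\<lambda>c. pmf_of_set (cube n) \<bind> (\<lambda>r.
       return_pmf (map (\<lambda>i. if i \<in> J then c ! i else r ! i) [0..<n])))"

end

theory Submission
  imports Defs
begin
lemma prob_bind_set:
  assumes "finite C" "C \<noteq> {}"
  shows "measure_pmf.prob (pmf_of_set C \<bind> N) X = (\<Sum>c\<in>C. measure_pmf.prob (N c) X) / card C"
proof -
  have "measure_pmf.prob (pmf_of_set C \<bind> N) X = (\<integral>x. measure_pmf.prob (N x) X \<partial>measure_pmf (pmf_of_set C))"
    unfolding measure_pmf_bind
    by (rule measure_pmf.measure_bind[where N="count_space UNIV"])
       (auto intro: measurable_measure_pmf simp: space_subprob_algebra subprob_space_measure_pmf)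
  also have "\<dots> = (\<Sum>c\<in>C. measure_pmf.prob (N c) X) / card C"
    using assms by (simp add: integral_pmf_of_set)
  finally show ?thesis .
qed

definition flipF :: "nat \<Rightarrow> nat set \<Rightarrow> bool list \<Rightarrow> bool list \<Rightarrow> bool list" where
  "flipF n J c r = map (\<lambda>i. if i \<in> J then c ! i else r ! i) [0..<n]"

lemma U_J_eq: "U_J n C J = pmf_of_set C \<bind> (\<lambda>c. map_pmf (flipF n J c) (pmf_of_set (cube n)))"
  by (simp add: U_J_def map_pmf_def flipF_def)

lemma finite_cube: "finite (cube n)"
proof -
  have "cube n = {xs. set xs \<subseteq> (UNIV::bool set) \<and> length xs = n}" by (auto simp: cube_def)
  thus ?thesis using finite_lists_length_eq[of "UNIV::bool set" n] by simp
qed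

lemma card_cube: "card (cube n) = 2 ^ n"
proof -
  have "cube n = {xs. set xs \<subseteq> (UNIV::bool set) \<and> length xs = n}" by (auto simp: cube_def)
  thus ?thesis using card_lists_length_eq[of "UNIV::bool set" n] by simp
qed

lemma bij_D: "bij_betw (\<lambda>r. {i. i < n \<and> r ! i \<noteq> c ! i}) (cube n) (Pow {0..<n})"
proof (rule bij_betw_imageI)
  show "inj_on (\<lambda>r. {i. i < n \<and> r ! i \<noteq> c ! i}) (cube n)"
  proof (rule inj_onI)
    fix r s assume r: "r \<in> cube n" and s: "s \<in> cube n"
      and e: "{i. i < n \<and> r ! i \<noteq> c ! i} = {i. i < n \<and> s ! i \<noteq> c ! i}"
    show "r = s"
    proof (rule nth_equalityI)
      show "length r = length s" using r s by (simp add: cube_def)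
      fix i assume "i < length r"
      hence "i < n" using r by (simp add: cube_def)
      hence "(r ! i \<noteq> c ! i) = (s ! i \<noteq> c ! i)" using e by blast
      thus "r ! i = s ! i" by auto
    qed
  qed
  show "(\<lambda>r. {i. i < n \<and> r ! i \<noteq> c ! i}) ` cube n = Pow {0..<n}"
  proof
    show "(\<lambda>r. {i. i < n \<and> r ! i \<noteq> c ! i}) ` cube n \<subseteq> Pow {0..<n}" by auto
    show "Pow {0..<n} \<subseteq> (\<lambda>r. {i. i < n \<and> r ! i \<noteq> c ! i}) ` cube n"
    proof
      fix D assume D: "D \<in> Pow {0..<n}"
      let ?r = "map (\<lambda>i. (c ! i) \<noteq> (i \<in> D)) [0..<n]"
      have "?r \<in> cube n" by (simp add: cube_def)
      moreover have "D = {i. i < n \<and> ?r ! i \<noteq> c ! i}" using D by auto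
      ultimately show "D \<in> (\<lambda>r. {i. i < n \<and> r ! i \<noteq> c ! i}) ` cube n" by blast
    qed
  qed
qed

lemma sum_pow_weight:
  assumes J: "J \<subseteq> {0..<n}"
  shows "(\<Sum>D\<in>Pow {0..<n}. (1/3::real) ^ card (D \<inter> ({0..<n} - J)))
         = (4/3) ^ (n - card J) * 2 ^ card J"
proof -
  define K where "K = {0..<n} - J"
  define w where "w i = (if i \<in> K then 1/3 else (1::real))" for i
  have "(\<Prod>i\<in>{0..<n}. w i + 1) = (\<Sum>X\<in>Pow {0..<n}. (\<Prod>x\<in>X. w x) * (\<Prod>x\<in>{0..<n}-X. 1))"
    by (rule prod_add) simp
  also have "\<dots> = (\<Sum>D\<in>Pow {0..<n}. (1/3::real) ^ card (D \<inter> K))"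
  proof (rule sum.cong)
    fix D assume "D \<in> Pow {0..<n}"
    hence fD: "finite D" by (auto intro: finite_subset)
    have "(\<Prod>x\<in>D. w x) = (\<Prod>x\<in>D \<inter> {x. x \<in> K}. 1/3) * (\<Prod>x\<in>D \<inter> - {x. x \<in> K}. 1)"
      unfolding w_def by (rule prod.If_cases[OF fD])
    also have "\<dots> = (1/3) ^ card (D \<inter> K)" by simp
    finally show "(\<Prod>x\<in>D. w x) * (\<Prod>x\<in>{0..<n}-D. 1) = (1/3::real) ^ card (D \<inter> K)" by simp
  qed simp
  finally have 1: "(\<Sum>D\<in>Pow {0..<n}. (1/3::real) ^ card (D \<inter> K)) = (\<Prod>i\<in>{0..<n}. w i + 1)" by simp
  have "(\<Prod>i\<in>{0..<n}. w i + 1) = (\<Prod>i\<in>{0..<n}. if i \<in> K then 4/3 else 2)"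
    unfolding w_def by (rule prod.cong) auto
  also have "\<dots> = (\<Prod>x\<in>{0..<n} \<inter> {x. x \<in> K}. 4/3) * (\<Prod>x\<in>{0..<n} \<inter> - {x. x \<in> K}. 2)"
    by (rule prod.If_cases) simp
  also have "{0..<n} \<inter> {x. x \<in> K} = K" unfolding K_def by auto
  also have "{0..<n} \<inter> - {x. x \<in> K} = J" unfolding K_def using J by auto
  finally have 2: "(\<Prod>i\<in>{0..<n}. w i + 1) = (4/3) ^ card K * 2 ^ card J" by simp
  have "card K = n - card J" unfolding K_def using J by (simp add: card_Diff_subset finite_subset)
  thus ?thesis using 1 2 unfolding K_def by simp
qed
lemma count_bound:
  assumes eps: "eps < 1/8" and J: "J \<subseteq> {0..<n}"
  shows "real (card {r \<in> cube n. hdist (flipF n J c0 r) c \<le> eps})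
         \<le> 3 powr (real n / 8) * ((4/3) ^ (n - card J) * 2 ^ card J)"
proof -
  define D where "D r = {i. i < n \<and> r ! i \<noteq> c ! i}" for r :: "bool list"
  define K where "K = {0..<n} - J"
  define S where "S = {r \<in> cube n. real (card (D r \<inter> K)) \<le> real n / 8}"
  have fS: "finite S" unfolding S_def using finite_cube by simp
  have sub: "{r \<in> cube n. hdist (flipF n J c0 r) c \<le> eps} \<subseteq> S"
  proof
    fix r assume "r \<in> {r \<in> cube n. hdist (flipF n J c0 r) c \<le> eps}"
    hence r: "r \<in> cube n" and h: "hdist (flipF n J c0 r) c \<le> eps" by auto
    let ?T = "{i. i < n \<and> flipF n J c0 r ! i \<noteq> c ! i}"
    have len: "length (flipF n J c0 r) = n" by (simp add: flipF_def)
    have "D r \<inter> K \<subseteq> ?T" unfolding D_def K_def by (auto simp: flipF_def)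
    hence le: "card (D r \<inter> K) \<le> card ?T" by (intro card_mono) auto
    have "real (card (D r \<inter> K)) \<le> real n / 8"
    proof (cases "n = 0")
      case True thus ?thesis unfolding K_def by simp
    next
      case False
      have "real (card ?T) / real n \<le> eps" using h len unfolding hdist_def by simp
      hence "real (card ?T) \<le> eps * real n" using False by (simp add: divide_le_eq)
      also have "\<dots> \<le> 1/8 * real n" using eps by (intro mult_right_mono) auto
      finally show ?thesis using le by linarith
    qed
    thus "r \<in> S" unfolding S_def using r by simp
  qed
  have "real (card {r \<in> cube n. hdist (flipF n J c0 r) c \<le> eps}) \<le> real (card S)"
    using card_mono[OF fS sub] by simp
  also have "real (card S) = (\<Sum>r\<in>S. 1)" by simp
  also have "\<dots> \<le> (\<Sum>r\<in>S. 3 powr (real n / 8) * (1/3) ^ card (D r \<inter> K))"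
  proof (rule sum_mono)
    fix r assume "r \<in> S"
    hence k: "real (card (D r \<inter> K)) \<le> real n / 8" unfolding S_def by simp
    have "(3::real) ^ card (D r \<inter> K) = 3 powr real (card (D r \<inter> K))" by (simp add: powr_realpow)
    also have "\<dots> \<le> 3 powr (real n / 8)" using k by (intro powr_mono) auto
    finally have "(3::real) ^ card (D r \<inter> K) \<le> 3 powr (real n / 8)" .
    thus "1 \<le> 3 powr (real n / 8) * (1/3::real) ^ card (D r \<inter> K)"
      by (simp add: power_one_over field_simps)
  qed
  also have "\<dots> \<le> (\<Sum>r\<in>cube n. 3 powr (real n / 8) * (1/3) ^ card (D r \<inter> K))"
    by (rule sum_mono2[OF finite_cube]) (auto simp: S_def)
  also have "\<dots> = 3 powr (real n / 8) * (\<Sum>r\<in>cube n. (1/3) ^ card (D r \<inter> K))"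
    by (simp add: sum_distrib_left)
  also have "(\<Sum>r\<in>cube n. (1/3::real) ^ card (D r \<inter> K)) = (\<Sum>E\<in>Pow {0..<n}. (1/3) ^ card (E \<inter> K))"
    using sum.reindex_bij_betw[OF bij_D[of n c], of "\<lambda>E. (1/3::real) ^ card (E \<inter> K)"]
    unfolding D_def by simp
  also have "\<dots> = (4/3) ^ (n - card J) * 2 ^ card J"
    unfolding K_def by (rule sum_pow_weight[OF J])
  finally show ?thesis .
qed
definition Lc :: real where "Lc = 33/64 * ln 2 - 3/8 * ln 3"
definition del :: "nat \<Rightarrow> real" where "del n = exp Lc ^ n"

lemma Lc_neg: "Lc < 0"
proof -
  have "ln ((2::real) ^ 33) < ln (3 ^ 24)" by (subst ln_less_cancel_iff) auto
  moreover have "ln ((2::real) ^ 33) = 33 * ln 2" using ln_realpow[of "2::real" 33] by simp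
  moreover have "ln ((3::real) ^ 24) = 24 * ln 3" using ln_realpow[of "3::real" 24] by simp
  ultimately show ?thesis unfolding Lc_def by linarith
qed

lemma del_lim: "del \<longlonglongrightarrow> 0"
  unfolding del_def using Lc_neg by (intro LIMSEQ_power_zero) auto

lemma del_eq: "2 powr (real n / 64) * 3 powr (real n / 8) * (2/3) powr (real n / 2) = del n"
proof -
  have "del n = exp (real n * Lc)" unfolding del_def by (simp add: exp_of_nat_mult)
  also have "\<dots> = exp (real n / 64 * ln 2 + real n / 8 * ln 3 + real n / 2 * ln (2/3))"
    unfolding Lc_def by (simp add: ln_div algebra_simps)
  also have "\<dots> = 2 powr (real n / 64) * 3 powr (real n / 8) * (2/3) powr (real n / 2)"
    by (simp add: powr_def exp_add)
  finally show ?thesis by simp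
qed
lemma notfar_bound:
  assumes eps: "eps < 1/8" and J: "J \<subseteq> {0..<n}" and cJ: "real (card J) \<le> real n / 2"
    and C: "C \<subseteq> cube n" "C \<noteq> {}" and cC: "real (card C) \<le> 2 powr (real n / 64)"
  shows "measure_pmf.prob (map_pmf (flipF n J c0) (pmf_of_set (cube n))) {x. \<not> eps_far eps x C} \<le> del n"
proof -
  have fC: "finite C" using C finite_cube finite_subset by blast
  have ne: "cube n \<noteq> {}" using C by auto
  define B where "B = 3 powr (real n / 8) * ((4/3) ^ (n - card J) * 2 ^ card J)"
  have sub: "cube n \<inter> flipF n J c0 -` {x. \<not> eps_far eps x C}
        \<subseteq> (\<Union>c\<in>C. {r \<in> cube n. hdist (flipF n J c0 r) c \<le> eps})"
  proof
    fix r assume "r \<in> cube n \<inter> flipF n J c0 -` {x. \<not> eps_far eps x C}"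
    hence r: "r \<in> cube n" and nf: "Min (hdist (flipF n J c0 r) ` C) \<le> eps"
      by (auto simp: eps_far_def dist_code_def)
    have "Min (hdist (flipF n J c0 r) ` C) \<in> hdist (flipF n J c0 r) ` C"
      using fC C(2) by (intro Min_in) auto
    then obtain c where "c \<in> C" "hdist (flipF n J c0 r) c \<le> eps" using nf by auto
    thus "r \<in> (\<Union>c\<in>C. {r \<in> cube n. hdist (flipF n J c0 r) c \<le> eps})" using r by auto
  qed
  have "real (card (cube n \<inter> flipF n J c0 -` {x. \<not> eps_far eps x C}))
      \<le> real (card (\<Union>c\<in>C. {r \<in> cube n. hdist (flipF n J c0 r) c \<le> eps}))"
    using card_mono[OF _ sub] fC finite_cube by simp
  also have "\<dots> \<le> real (\<Sum>c\<in>C. card {r \<in> cube n. hdist (flipF n J c0 r) c \<le> eps})"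
    using card_UN_le[OF fC] by (simp only: of_nat_le_iff)
  also have "\<dots> = (\<Sum>c\<in>C. real (card {r \<in> cube n. hdist (flipF n J c0 r) c \<le> eps}))" by simp
  also have "\<dots> \<le> (\<Sum>c\<in>C. B)"
    unfolding B_def by (intro sum_mono count_bound[OF eps J])
  also have "\<dots> = real (card C) * B" by simp
  finally have cnt: "real (card (cube n \<inter> flipF n J c0 -` {x. \<not> eps_far eps x C})) \<le> real (card C) * B" .
  have "measure_pmf.prob (map_pmf (flipF n J c0) (pmf_of_set (cube n))) {x. \<not> eps_far eps x C}
      = real (card (cube n \<inter> flipF n J c0 -` {x. \<not> eps_far eps x C})) / 2 ^ n"
    using ne finite_cube by (simp add: measure_pmf_of_set card_cube)
  also have "\<dots> \<le> real (card C) * B / 2 ^ n" using cnt by (simp add: divide_right_mono)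
  also have "B / 2 ^ n = 3 powr (real n / 8) * (2/3) ^ (n - card J)"
  proof -
    have cJn: "card J \<le> n" using J by (metis card_atLeastLessThan card_mono finite_atLeastLessThan diff_zero)
    have "(2::real) ^ n = 2 ^ (n - card J) * 2 ^ card J" using cJn by (simp add: power_add[symmetric])
    moreover have "(4/3::real) ^ (n - card J) = 2 ^ (n - card J) * (2/3) ^ (n - card J)"
      by (simp add: power_mult_distrib[symmetric])
    ultimately show ?thesis unfolding B_def by simp
  qed
  hence "real (card C) * B / 2 ^ n = real (card C) * (3 powr (real n / 8) * (2/3) ^ (n - card J))"
    by (simp add: field_simps)
  also have "\<dots> \<le> 2 powr (real n / 64) * (3 powr (real n / 8) * (2/3) powr (real n / 2))"
  proof (rule mult_mono[OF cC])
    have "(2/3::real) ^ (n - card J) = (2/3) powr real (n - card J)" by (simp add: powr_realpow)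
    also have "\<dots> \<le> (2/3) powr (real n / 2)"
      using cJ by (intro powr_mono') (auto simp: of_nat_diff)
    finally show "3 powr (real n / 8) * (2 / 3) ^ (n - card J) \<le> 3 powr (real n / 8) * (2 / 3) powr (real n / 2)"
      by simp
  qed auto
  also have "\<dots> = del n" using del_eq[of n] by (simp add: mult.assoc)
  finally show ?thesis .
qed
lemma restr_flip:
  assumes "J \<subseteq> {0..<n}"
  shows "restr (flipF n J c r) J = restr c J"
proof -
  have fJ: "finite J" using assms finite_subset by blast
  show ?thesis unfolding restr_def flipF_def
    using assms by (intro map_cong) (auto simp: fJ)
qed

lemma far_prob:
  assumes eps: "eps < 1/8" and J: "J \<subseteq> {0..<n}" and cJ: "real (card J) \<le> real n / 2"
    and C: "C \<subseteq> cube n" "C \<noteq> {}" and cC: "real (card C) \<le> 2 powr (real n / 64)"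
  shows "measure_pmf.prob (map_pmf (flipF n J c0) (pmf_of_set (cube n))) {x. eps_far eps x C} \<ge> 1 - del n"
proof -
  let ?M = "map_pmf (flipF n J c0) (pmf_of_set (cube n))"
  have "measure_pmf.prob ?M {x. eps_far eps x C} = 1 - measure_pmf.prob ?M {x. \<not> eps_far eps x C}"
    using measure_pmf.prob_compl[where A="{x. \<not> eps_far eps x C}" and M="map_pmf (flipF n J c0) (pmf_of_set (cube n))"]
    by (simp add: Compl_eq_Diff_UNIV[symmetric] Collect_neg_eq[symmetric])
  thus ?thesis using notfar_bound[OF assms] by simp
qed

lemma cond_pointwise:
  assumes eps: "eps < 1/8" and J: "J \<subseteq> {0..<n}" and cJ: "real (card J) \<le> real n / 2"
    and C: "C \<subseteq> cube n" "C \<noteq> {}" and cC: "real (card C) \<le> 2 powr (real n / 64)"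
  shows "measure_pmf.prob (map_pmf (flipF n J c) (pmf_of_set (cube n))) {x. eps_far eps x C \<and> restr x J = y}
     \<ge> (1 - del n) * measure_pmf.prob (map_pmf (flipF n J c) (pmf_of_set (cube n))) {x. restr x J = y}"
proof (cases "restr c J = y")
  case True
  have "measure_pmf.prob (map_pmf (flipF n J c) (pmf_of_set (cube n))) {x. eps_far eps x C \<and> restr x J = y}
      = measure_pmf.prob (map_pmf (flipF n J c) (pmf_of_set (cube n))) {x. eps_far eps x C}"
    using True restr_flip[OF J] by (simp add: vimage_def)
  moreover have "measure_pmf.prob (map_pmf (flipF n J c) (pmf_of_set (cube n))) {x. restr x J = y} = 1"
    using True restr_flip[OF J] by (simp add: vimage_def)
  ultimately show ?thesis using far_prob[OF assms] by simp
next
  case False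
  have "measure_pmf.prob (map_pmf (flipF n J c) (pmf_of_set (cube n))) {x. restr x J = y} = 0"
    using False restr_flip[OF J] by (simp add: vimage_def)
  thus ?thesis by simp
qed

theorem lemma6:
  fixes eps :: real
  assumes "eps < 1/8"
  shows "\<exists>\<delta> :: nat \<Rightarrow> real. \<delta> \<longlonglongrightarrow> 0 \<and>
    (\<forall>n C J. C \<subseteq> cube n \<longrightarrow> C \<noteq> {} \<longrightarrow>
       real (card C) \<le> 2 powr (real n / 64) \<longrightarrow>
       J \<subseteq> {0..<n} \<longrightarrow> real (card J) \<le> real n / 2 \<longrightarrow>
       measure_pmf.prob (U_J n C J) {x. eps_far eps x C} \<ge> 1 - \<delta> n \<and>
       (\<forall>y. measure_pmf.prob (U_J n C J) {x. restr x J = y} > 0 \<longrightarrow>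
          measure_pmf.prob (U_J n C J) {x. eps_far eps x C \<and> restr x J = y}
            / measure_pmf.prob (U_J n C J) {x. restr x J = y} \<ge> 1 - \<delta> n))"
proof (intro exI[of _ del] conjI allI impI)
  show "del \<longlonglongrightarrow> 0" by (rule del_lim)
  fix n C J
  assume C1: "C \<subseteq> cube n" and C2: "C \<noteq> {}" and cC: "real (card C) \<le> 2 powr (real n / 64)"
    and J: "J \<subseteq> {0..<n}" and cJ: "real (card J) \<le> real n / 2"
  note A = assms J cJ C1 C2 cC
  have fC: "finite C" using C1 finite_cube finite_subset by blast
  have cpos: "real (card C) > 0" using fC C2 by (simp add: card_gt_0_iff)
  let ?M = "\<lambda>c. map_pmf (flipF n J c) (pmf_of_set (cube n))"
  have P: "measure_pmf.prob (U_J n C J) X = (\<Sum>c\<in>C. measure_pmf.prob (?M c) X) / card C" for X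
    unfolding U_J_eq by (rule prob_bind_set[OF fC C2])
  have "(\<Sum>c\<in>C. 1 - del n) \<le> (\<Sum>c\<in>C. measure_pmf.prob (?M c) {x. eps_far eps x C})"
    by (intro sum_mono far_prob[OF A])
  hence "real (card C) * (1 - del n) \<le> (\<Sum>c\<in>C. measure_pmf.prob (?M c) {x. eps_far eps x C})" by simp
  thus "1 - del n \<le> measure_pmf.prob (U_J n C J) {x. eps_far eps x C}"
    unfolding P using cpos by (simp add: le_divide_eq mult.commute)
  fix y
  assume pos: "measure_pmf.prob (U_J n C J) {x. restr x J = y} > 0"
  have "(\<Sum>c\<in>C. (1 - del n) * measure_pmf.prob (?M c) {x. restr x J = y})
      \<le> (\<Sum>c\<in>C. measure_pmf.prob (?M c) {x. eps_far eps x C \<and> restr x J = y})"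
    by (intro sum_mono cond_pointwise[OF A])
  hence "(1 - del n) * measure_pmf.prob (U_J n C J) {x. restr x J = y}
      \<le> measure_pmf.prob (U_J n C J) {x. eps_far eps x C \<and> restr x J = y}"
    unfolding P using cpos by (simp add: sum_distrib_left[symmetric] divide_right_mono)
  thus "1 - del n \<le> measure_pmf.prob (U_J n C J) {x. eps_far eps x C \<and> restr x J = y}
            / measure_pmf.prob (U_J n C J) {x. restr x J = y}"
    using pos by (simp add: le_divide_eq)
qed
end
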